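(* Let $k\ge1$, let $a\le b$ be integers, and let $W=(w_1,\dots,w_k)$, $W'=(w'_1,\dots,w'_k)\in(\mathbb C\setminus\{0,-1\})^k$ with $w_i\ne w'_{i'}$ for all $i,i'$. Define $$\hat S_{a,b}(W,W')=\sum_{a\le x_1\le\cdots\le x_k\le b}\det\big[(w_i+1)^{x_j}w_i^j\big]_{i,j=1}^k\det\big[(w'_i+1)^{-x_j}(w'_i)^{-j}\big]_{i,j=1}^k,$$ the sum over integers $x_1,\dots,x_k$. Then $$\hat S_{a,b}(W,W')=\det\Big[\frac{1}{-w_i+w'_{i'}}\cdot\frac{w_i(w_i+1)^a}{w'_{i'}(w'_{i'}+1)^{a-1}}+\frac{1}{w_i-w'_{i'}}\cdot\frac{w_i^k(w_i+1)^{b+1}}{(w'_{i'})^k(w'_{i'}+1)^b}\Big]_{i,i'=1}^k.$$ *)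

theory Defs
  imports "Jordan_Normal_Form.Determinant"
begin

(* Indices are 0-based: row/column i,j in {0..<k} correspond to i+1, j+1 in the paper. *)

definition weak_chains :: "nat \<Rightarrow> int \<Rightarrow> int \<Rightarrow> int list set" where
  "weak_chains k a b = {xs. length xs = k \<and> sorted xs \<and> set xs \<subseteq> {a..b}}"

definition S_hat :: "nat \<Rightarrow> int \<Rightarrow> int \<Rightarrow> (nat \<Rightarrow> complex) \<Rightarrow> (nat \<Rightarrow> complex) \<Rightarrow> complex" where
  "S_hat k a b w w' =
     (\<Sum>xs\<in>weak_chains k a b.
        det (mat k k (\<lambda>(i,j). (w i + 1) powi (xs ! j) * (w i) ^ (j+1)))
      * det (mat k k (\<lambda>(i,j). (w' i + 1) powi (- (xs ! j)) * (w' i) powi (- int (j+1)))))"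

end

theory Submission
  imports Defs
begin


lemma det_mat_leib:
  "det (mat n n g) = (\<Sum>p\<in>{p. p permutes {0..<n}}. signof p * (\<Prod>i=0..<n. g (i, p i)))"
proof -
  have "det (mat n n g) = (\<Sum>p\<in>{p. p permutes {0..<n}}. signof p * (\<Prod>i=0..<n. mat n n g $$ (i, p i)))"
    by (rule det_def', simp)
  also have "\<dots> = (\<Sum>p\<in>{p. p permutes {0..<n}}. signof p * (\<Prod>i=0..<n. g (i, p i)))"
  proof (rule sum.cong[OF refl])
    fix p assume "p \<in> {p. p permutes {0..<n}}"
    hence p: "p permutes {0..<n}" by simp
    have "\<And>i. i \<in> {0..<n} \<Longrightarrow> p i < n" using permutes_in_image[OF p] by auto
    thus "signof p * (\<Prod>i=0..<n. mat n n g $$ (i, p i)) = signof p * (\<Prod>i=0..<n. g (i, p i))"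
      by (intro arg_cong[where f="\<lambda>x. signof p * x"] prod.cong) auto
  qed
  finally show ?thesis .
qed

lemma det_row_lin:
  assumes k: "k < n"
  shows "det (mat n n (\<lambda>(i,j). if i = k then a j + c * b j else f i j)) =
    det (mat n n (\<lambda>(i,j). if i = k then a j else f i j)) + c * det (mat n n (\<lambda>(i,j). if i = k then b j else f i j))"
proof -
  let ?P = "{p. p permutes {0..<n}}"
  let ?R = "\<lambda>p. (\<Prod>i\<in>{0..<n}-{k}. f i (p i))"
  have kin: "k \<in> {0..<n}" using k by simp
  have split: "\<And>h. (\<Prod>i=0..<n. (if i = k then h (p i) else f i (p i))) = h (p k) * ?R p" for p
  proof -
    fix h
    have "(\<Prod>i=0..<n. (if i = k then h (p i) else f i (p i))) = (if k = k then h (p k) else f k (p k)) * (\<Prod>i\<in>{0..<n}-{k}. (if i = k then h (p i) else f i (p i)))"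
      by (rule prod.remove[OF _ kin]) simp
    also have "(\<Prod>i\<in>{0..<n}-{k}. (if i = k then h (p i) else f i (p i))) = ?R p"
      by (rule prod.cong) auto
    finally show "(\<Prod>i=0..<n. (if i = k then h (p i) else f i (p i))) = h (p k) * ?R p" by simp
  qed
  have e: "\<And>h. det (mat n n (\<lambda>(i,j). if i = k then h j else f i j)) = (\<Sum>p\<in>?P. signof p * (h (p k) * ?R p))"
    by (simp add: det_mat_leib split)
  show ?thesis unfolding e[of "\<lambda>j. a j + c * b j"] e[of a] e[of b]
    by (simp add: sum_distrib_left sum.distrib[symmetric] algebra_simps)
qed

lemma det_ident_rows_fun:
  assumes "k \<noteq> t" "k < n" "t < n" "\<And>j. j < n \<Longrightarrow> g (k,j) = g (t,j)"
  shows "det (mat n n g) = (0::'a::comm_ring_1)"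
  by (rule det_identical_rows[of _ n k t]) (use assms in \<open>auto intro!: eq_vecI\<close>)

lemma det_Q:
  assumes t: "t < n"
  shows "s \<le> n \<Longrightarrow> det (mat n n (\<lambda>(i,j). if i = t then \<beta> j else if i < s then N i j + \<delta> i * \<beta> j else N i j))
     = det (mat n n (\<lambda>(i,j). if i = t then \<beta> j else N i j :: 'a::comm_ring_1))"
proof (induction s)
  case 0
  have "mat n n (\<lambda>(i,j). if i = t then \<beta> j else if i < 0 then N i j + \<delta> i * \<beta> j else N i j) = mat n n (\<lambda>(i,j). if i = t then \<beta> j else N i j)"
    by (rule eq_matI) auto
  then show ?case by simp
next
  case (Suc s)
  hence s: "s < n" by simp
  show ?case
  proof (cases "s = t")
    case True
    have "(\<lambda>(i,j). if i = t then \<beta> j else if i < Suc s then N i j + \<delta> i * \<beta> j else N i j)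
        = (\<lambda>(i,j). if i = t then \<beta> j else if i < s then N i j + \<delta> i * \<beta> j else N i j)"
      using True by (auto simp: fun_eq_iff)
    then show ?thesis using Suc by simp
  next
    case False
    let ?f = "\<lambda>i j. if i = t then \<beta> j else if i < s then N i j + \<delta> i * \<beta> j else N i j"
    have eq: "(\<lambda>(i,j). if i = t then \<beta> j else if i < Suc s then N i j + \<delta> i * \<beta> j else N i j)
        = (\<lambda>(i,j). if i = s then N s j + \<delta> s * \<beta> j else ?f i j)"
      using False by (auto simp: fun_eq_iff)
    have eq2: "(\<lambda>(i,j). if i = s then N s j else ?f i j) = (\<lambda>(i,j). ?f i j)"
      using False by (auto simp: fun_eq_iff)
    have z: "det (mat n n (\<lambda>(i,j). if i = s then \<beta> j else ?f i j)) = 0"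
      by (rule det_ident_rows_fun[of s t]) (use False s t in auto)
    show ?thesis unfolding eq det_row_lin[OF s] z eq2 using Suc by simp
  qed
qed

lemma det_R:
  "t \<le> n \<Longrightarrow> det (mat n n (\<lambda>(i,j). if i < t then N i j + \<delta> i * \<beta> j else N i j)) =
    det (mat n n (\<lambda>(i,j). N i j)) + (\<Sum>s<t. \<delta> s * det (mat n n (\<lambda>(i,j). if i = s then \<beta> j else N i j :: 'a::comm_ring_1)))"
proof (induction t)
  case 0
  have "mat n n (\<lambda>(i,j). if i < 0 then N i j + \<delta> i * \<beta> j else N i j) = mat n n (\<lambda>(i,j). N i j)"
    by (rule eq_matI) auto
  then show ?case by simp
next
  case (Suc t)
  hence t: "t < n" by simp
  let ?f = "\<lambda>i j. if i < t then N i j + \<delta> i * \<beta> j else N i j"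
  have eq: "(\<lambda>(i,j). if i < Suc t then N i j + \<delta> i * \<beta> j else N i j)
        = (\<lambda>(i,j). if i = t then N t j + \<delta> t * \<beta> j else ?f i j)"
    by (auto simp: fun_eq_iff)
  have eq2: "(\<lambda>(i,j). if i = t then N t j else ?f i j) = (\<lambda>(i,j). ?f i j)"
    by (auto simp: fun_eq_iff)
  have eq3: "(\<lambda>(i,j). if i = t then \<beta> j else ?f i j) = (\<lambda>(i,j). if i = t then \<beta> j else if i < t then N i j + \<delta> i * \<beta> j else N i j)"
    by (auto simp: fun_eq_iff)
  show ?case unfolding eq det_row_lin[OF t] eq2 using Suc det_Q[OF t, where s=t and \<beta>=\<beta> and N=N and \<delta>=\<delta>] t by simp
qed

lemma det_row_replace_laplace:
  assumes s: "s < n"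
  shows "det (mat n n (\<lambda>(i,j). if i = s then \<beta> j else N i j)) =
     (\<Sum>j<n. \<beta> j * ((-1)^(s+j) * det (mat_delete (mat n n (\<lambda>(i,j). N i j)) s j)) :: 'a::comm_ring_1)"
proof -
  have "det (mat n n (\<lambda>(i,j). if i = s then \<beta> j else N i j)) =
    (\<Sum>j<n. mat n n (\<lambda>(i,j). if i = s then \<beta> j else N i j) $$ (s,j) * cofactor (mat n n (\<lambda>(i,j). if i = s then \<beta> j else N i j)) s j)"
    by (rule laplace_expansion_row[OF _ s]) simp
  also have "\<dots> = (\<Sum>j<n. \<beta> j * ((-1)^(s+j) * det (mat_delete (mat n n (\<lambda>(i,j). N i j)) s j)))"
  proof (rule sum.cong[OF refl])
    fix j assume "j \<in> {..<n}"
    hence j: "j < n" by simp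
    have "mat_delete (mat n n (\<lambda>(i,j). if i = s then \<beta> j else N i j)) s j = mat_delete (mat n n (\<lambda>(i,j). N i j)) s j"
      unfolding mat_delete_def by (rule eq_matI) auto
    then show "mat n n (\<lambda>(i,j). if i = s then \<beta> j else N i j) $$ (s,j) * cofactor (mat n n (\<lambda>(i,j). if i = s then \<beta> j else N i j)) s j
       = \<beta> j * ((-1)^(s+j) * det (mat_delete (mat n n (\<lambda>(i,j). N i j)) s j))"
      using s j by (simp add: cofactor_def)
  qed
  finally show ?thesis .
qed

lemma MDL:
  "det (mat n n (\<lambda>(i,j). N i j + \<delta> i * \<beta> j)) = det (mat n n (\<lambda>(i,j). N i j)) +
    (\<Sum>s<n. \<Sum>j<n. \<delta> s * \<beta> j * ((-1)^(s+j) * det (mat_delete (mat n n (\<lambda>(i,j). N i j)) s j)) :: 'a::comm_ring_1)"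
proof -
  have "mat n n (\<lambda>(i,j). N i j + \<delta> i * \<beta> j) = mat n n (\<lambda>(i,j). if i < n then N i j + \<delta> i * \<beta> j else N i j)"
    by (rule eq_matI) auto
  hence "det (mat n n (\<lambda>(i,j). N i j + \<delta> i * \<beta> j)) = det (mat n n (\<lambda>(i,j). if i < n then N i j + \<delta> i * \<beta> j else N i j))"
    by simp
  also have "\<dots> = det (mat n n (\<lambda>(i,j). N i j)) + (\<Sum>s<n. \<delta> s * det (mat n n (\<lambda>(i,j). if i = s then \<beta> j else N i j)))"
    by (rule det_R) simp
  also have "\<dots> = det (mat n n (\<lambda>(i,j). N i j)) +
    (\<Sum>s<n. \<Sum>j<n. \<delta> s * \<beta> j * ((-1)^(s+j) * det (mat_delete (mat n n (\<lambda>(i,j). N i j)) s j)))"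
    by (simp add: det_row_replace_laplace sum_distrib_left mult.assoc)
  finally show ?thesis .
qed

lemma MDL_diff:
  "det (mat n n (\<lambda>(i,j). N i j + \<alpha> i * \<beta> j)) - det (mat n n (\<lambda>(i,j). N i j)) =
    (\<Sum>s<n. \<Sum>j<n. \<alpha> s * \<beta> j * ((-1)^(s+j) * det (mat_delete (mat n n (\<lambda>(i,j). N i j + \<gamma> i * \<beta> j)) s j)) :: 'a::comm_ring_1)"
proof -
  let ?N' = "\<lambda>i j. N i j + \<gamma> i * \<beta> j"
  have e1: "(\<lambda>(i,j). N i j + \<alpha> i * \<beta> j) = (\<lambda>(i,j). ?N' i j + (\<alpha> i - \<gamma> i) * \<beta> j)"
    by (auto simp: fun_eq_iff algebra_simps)
  have e2: "(\<lambda>(i,j). N i j) = (\<lambda>(i,j). ?N' i j + (- \<gamma> i) * \<beta> j)"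
    by (auto simp: fun_eq_iff algebra_simps)
  let ?m = "\<lambda>s j. (-1)^(s+j) * det (mat_delete (mat n n (\<lambda>(i,j). ?N' i j)) s j)"
  have A: "det (mat n n (\<lambda>(i,j). N i j + \<alpha> i * \<beta> j)) = det (mat n n (\<lambda>(i,j). ?N' i j)) + (\<Sum>s<n. \<Sum>j<n. (\<alpha> s - \<gamma> s) * \<beta> j * ?m s j)"
    unfolding e1 by (rule MDL)
  have B: "det (mat n n (\<lambda>(i,j). N i j)) = det (mat n n (\<lambda>(i,j). ?N' i j)) + (\<Sum>s<n. \<Sum>j<n. (- \<gamma> s) * \<beta> j * ?m s j)"
    by (subst e2) (rule MDL)
  have C: "(\<Sum>s<n. \<Sum>j<n. (\<alpha> s - \<gamma> s) * \<beta> j * ?m s j) - (\<Sum>s<n. \<Sum>j<n. (- \<gamma> s) * \<beta> j * ?m s j)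
      = (\<Sum>s<n. \<Sum>j<n. \<alpha> s * \<beta> j * ?m s j)"
  proof -
    have "(\<Sum>s<n. \<Sum>j<n. (\<alpha> s - \<gamma> s) * \<beta> j * ?m s j) - (\<Sum>s<n. \<Sum>j<n. (- \<gamma> s) * \<beta> j * ?m s j)
      = (\<Sum>s<n. \<Sum>j<n. (\<alpha> s - \<gamma> s) * \<beta> j * ?m s j - (- \<gamma> s) * \<beta> j * ?m s j)"
      by (simp only: sum_subtractf)
    also have "\<dots> = (\<Sum>s<n. \<Sum>j<n. \<alpha> s * \<beta> j * ?m s j)"
      by (intro sum.cong refl) (simp add: algebra_simps)
    finally show ?thesis .
  qed
  show ?thesis unfolding A B add_diff_cancel_left by (rule C)
qed



definition E :: "nat \<Rightarrow> int \<Rightarrow> int \<Rightarrow> complex \<Rightarrow> complex \<Rightarrow> complex" where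
  "E k a b x y = 1 / (- x + y) * (x * (x + 1) powi a / (y * (y + 1) powi (a - 1)))
      + 1 / (x - y) * (x ^ k * (x + 1) powi (b + 1) / (y ^ k * (y + 1) powi b))"

lemma pw_split:
  assumes "(z::complex) \<noteq> 0"
  shows "z powi (b + 1) = z powi b * z" "z powi (b - 1) = z powi b / z" "z powi (- b) = 1 / z powi b"
    "z powi (b - 1 + 1) = z powi b" "z powi b \<noteq> 0"
  using assms by (auto simp: power_int_add power_int_diff power_int_minus_divide)

lemma alg1:
  fixes x y X Y P Q :: complex
  assumes "x - y \<noteq> 0" "y + 1 \<noteq> 0" "X \<noteq> 0" "Y \<noteq> 0" "P \<noteq> 0" "Q \<noteq> 0"
  shows "1 / (x - y) * (X * (P * (x+1)) / (Y * Q)) = 1 / (x - y) * (X * P / (Y * (Q / (y+1)))) + P * X * (1 / Q * (1 / Y))"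
  using assms by (simp add: field_simps)

lemma alg2:
  fixes x y X Y P Q :: complex
  assumes "x - y \<noteq> 0" "y + 1 \<noteq> 0" "y \<noteq> 0" "X \<noteq> 0" "Y \<noteq> 0" "P \<noteq> 0" "Q \<noteq> 0"
  shows "1 / (x - y) * (X * (P * (x+1)) / (Y * Q)) = 1 / (x - y) * (x * X * P / (y * Y * (Q / (y+1)))) + (- (X * P)) * (1 / Q * (1 / (y * Y)))"
  using assms by (simp add: field_simps)

lemma npow: "(y::complex) powi (- int n) = 1 / y ^ n"
  by (simp add: power_int_minus_divide power_int_of_nat)

lemma E1:
  assumes x: "x \<noteq> 0" "x + 1 \<noteq> 0" and y: "y \<noteq> 0" "y + 1 \<noteq> 0" and xy: "x \<noteq> y"
  shows "E (Suc m) a b x y = E (Suc m) a (b-1) x y + ((x+1) powi b * x ^ Suc m) * ((y+1) powi (-b) * y powi (- int (Suc m)))"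
proof -
  have xy': "x - y \<noteq> 0" using xy by auto
  have "1 / (x - y) * (x ^ Suc m * (x + 1) powi (b + 1) / (y ^ Suc m * (y + 1) powi b)) =
     1 / (x - y) * (x ^ Suc m * (x + 1) powi (b - 1 + 1) / (y ^ Suc m * (y + 1) powi (b-1))) + ((x+1) powi b * x ^ Suc m) * ((y+1) powi (-b) * y powi (- int (Suc m)))"
    unfolding diff_add_cancel pw_split[OF x(2)] pw_split[OF y(2)] npow
    by (rule alg1) (use x y xy' pw_split(5)[OF x(2)] pw_split(5)[OF y(2)] in auto)
  then show ?thesis unfolding E_def by simp
qed

lemma E2:
  assumes x: "x \<noteq> 0" "x + 1 \<noteq> 0" and y: "y \<noteq> 0" "y + 1 \<noteq> 0" and xy: "x \<noteq> y"
  shows "E m a b x y = E (Suc m) a (b-1) x y + (- (x ^ m * (x+1) powi b)) * ((y+1) powi (-b) * y powi (- int (Suc m)))"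
proof -
  have xy': "x - y \<noteq> 0" using xy by auto
  have "1 / (x - y) * (x ^ m * (x + 1) powi (b + 1) / (y ^ m * (y + 1) powi b)) =
     1 / (x - y) * (x ^ Suc m * (x + 1) powi (b - 1 + 1) / (y ^ Suc m * (y + 1) powi (b-1))) + (- (x ^ m * (x+1) powi b)) * ((y+1) powi (-b) * y powi (- int (Suc m)))"
    unfolding diff_add_cancel pw_split[OF x(2)] pw_split[OF y(2)] npow power_Suc
    by (rule alg2) (use x y xy' pw_split(5)[OF x(2)] pw_split(5)[OF y(2)] in auto)
  then show ?thesis unfolding E_def by simp
qed

lemma alg3:
  fixes x y X Y P Q :: complex
  assumes "x - y \<noteq> 0" "y + 1 \<noteq> 0" "y \<noteq> 0" "X \<noteq> 0" "Y \<noteq> 0" "P \<noteq> 0" "Q \<noteq> 0"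
  shows "(1 / (x - y) * (x * X * P / (y * Y * (Q / (y+1))))) - (1 / (x - y) * (X * P / (Y * (Q / (y+1)))))
 = X * P * (1 / (y * Y) * ((y+1) / Q))"
proof -
  define K where "K = X * P / (Y * (Q / (y+1)))"
  have 1: "x * X * P / (y * Y * (Q / (y+1))) = x / y * K" using assms by (simp add: K_def field_simps)
  have 2: "1/(x-y) * (x/y*K) - 1/(x-y)*K = K / y"
  proof -
    have r: "\<And>d r. d * (r * K) - d * K = (r - 1) * K * d" by (simp add: algebra_simps)
    have "1/(x-y) * (x/y*K) - 1/(x-y)*K = (x/y - 1) * K * (1/(x-y))" by (rule r)
    also have "x/y - 1 = (x-y)/y" using assms by (simp add: diff_divide_distrib)
    also have "(x-y)/y * K * (1/(x-y)) = K / y" using assms by simp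
    finally show ?thesis .
  qed
  have 3: "K / y = X * P * (1 / (y * Y) * ((y+1) / Q))" using assms by (simp add: K_def field_simps)
  show ?thesis unfolding 1 K_def[symmetric] 2 3 ..
qed

lemma E3:
  assumes x: "x \<noteq> 0" "x + 1 \<noteq> 0" and y: "y \<noteq> 0" "y + 1 \<noteq> 0" and xy: "x \<noteq> y"
  shows "E (Suc m) a (a-1) x y = (\<Sum>j<m. (x ^ (j+1) * (x+1) powi a) * (y powi (- int (j+2)) * (y+1) powi (1-a)))"
proof (induction m)
  case 0
  have xy': "x - y \<noteq> 0" "- x + y \<noteq> 0" using xy by auto
  have e: "1 / (- x + y) = - (1 / (x - y))" using xy' by (simp add: field_simps)
  show ?case unfolding E_def e by simp
next
  case (Suc m)
  have xy': "x - y \<noteq> 0" using xy by auto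
  have d: "E (Suc (Suc m)) a (a-1) x y - E (Suc m) a (a-1) x y = (x ^ (m+1) * (x+1) powi a) * (y powi (- int (m+2)) * (y+1) powi (1-a))"
  proof -
    have q: "(y+1) powi (1-a) = (y+1) / (y+1) powi a" using y(2) by (simp add: power_int_diff)
    have "1 / (x - y) * (x ^ Suc (Suc m) * (x + 1) powi (a - 1 + 1) / (y ^ Suc (Suc m) * (y + 1) powi (a-1)))
       - 1 / (x - y) * (x ^ Suc m * (x + 1) powi (a - 1 + 1) / (y ^ Suc m * (y + 1) powi (a-1)))
       = (x ^ (m+1) * (x+1) powi a) * (y powi (- int (m+2)) * (y+1) powi (1-a))"
      unfolding diff_add_cancel pw_split[OF x(2)] pw_split[OF y(2)] npow q
      apply (simp only: power_Suc[of x "Suc m"] power_Suc[of y "Suc m"] Suc_eq_plus1[symmetric] numeral_2_eq_2 add_Suc_right add_0_right)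
      by (rule alg3) (use x y xy' pw_split(5)[OF x(2)] pw_split(5)[OF y(2)] in auto)
    then show ?thesis unfolding E_def by simp
  qed
  show ?case using Suc d by (simp add: algebra_simps)
qed



definition D :: "nat \<Rightarrow> int \<Rightarrow> int \<Rightarrow> (nat \<Rightarrow> complex) \<Rightarrow> (nat \<Rightarrow> complex) \<Rightarrow> complex" where
  "D k a b w w' = det (mat k k (\<lambda>(i,j). E k a b (w i) (w' j)))"

definition ok :: "nat \<Rightarrow> (nat \<Rightarrow> complex) \<Rightarrow> (nat \<Rightarrow> complex) \<Rightarrow> bool" where
  "ok k w w' \<longleftrightarrow> (\<forall>i<k. w i \<noteq> 0 \<and> w i + 1 \<noteq> 0 \<and> w' i \<noteq> 0 \<and> w' i + 1 \<noteq> 0) \<and> (\<forall>i<k. \<forall>j<k. w i \<noteq> w' j)"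

lemma insert_index_lt: "r < m \<Longrightarrow> s < Suc m \<Longrightarrow> insert_index s r < Suc m"
  by (simp add: insert_index_def)

lemma ok_del: "ok (Suc m) w w' \<Longrightarrow> s < Suc m \<Longrightarrow> t < Suc m \<Longrightarrow>
  ok m (\<lambda>r. w (insert_index s r)) (\<lambda>r. w' (insert_index t r))"
  unfolding ok_def using insert_index_lt by blast

definition al :: "nat \<Rightarrow> int \<Rightarrow> complex \<Rightarrow> complex" where
  "al m b x = (x+1) powi b * x ^ Suc m"
definition be :: "nat \<Rightarrow> int \<Rightarrow> complex \<Rightarrow> complex" where
  "be m b y = (y+1) powi (-b) * y powi (- int (Suc m))"

lemma D_step:
  assumes ok: "ok (Suc m) w w'"
  shows "D (Suc m) a b w w' - D (Suc m) a (b-1) w w' =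
    (\<Sum>s<Suc m. \<Sum>j<Suc m. al m b (w s) * be m b (w' j) *
       ((-1)^(s+j) * D m a b (\<lambda>r. w (insert_index s r)) (\<lambda>r. w' (insert_index j r))))"
proof -
  let ?n = "Suc m"
  let ?N = "\<lambda>i j. E ?n a (b-1) (w i) (w' j)"
  let ?\<alpha> = "\<lambda>i. al m b (w i)"
  let ?\<beta> = "\<lambda>j. be m b (w' j)"
  let ?\<gamma> = "\<lambda>i. - (w i ^ m * (w i + 1) powi b)"
  have c: "\<And>i j. i < ?n \<Longrightarrow> j < ?n \<Longrightarrow> w i \<noteq> 0 \<and> w i + 1 \<noteq> 0 \<and> w' j \<noteq> 0 \<and> w' j + 1 \<noteq> 0 \<and> w i \<noteq> w' j"
    using ok unfolding ok_def by blast
  have 1: "mat ?n ?n (\<lambda>(i,j). E ?n a b (w i) (w' j)) = mat ?n ?n (\<lambda>(i,j). ?N i j + ?\<alpha> i * ?\<beta> j)"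
  proof (rule eq_matI)
    fix i j assume i: "i < dim_row (mat ?n ?n (\<lambda>(i,j). ?N i j + ?\<alpha> i * ?\<beta> j))" and j: "j < dim_col (mat ?n ?n (\<lambda>(i,j). ?N i j + ?\<alpha> i * ?\<beta> j))"
    hence i': "i < ?n" and j': "j < ?n" by auto
    show "mat ?n ?n (\<lambda>(i,j). E ?n a b (w i) (w' j)) $$ (i,j) = mat ?n ?n (\<lambda>(i,j). ?N i j + ?\<alpha> i * ?\<beta> j) $$ (i,j)"
      using i' j' E1[of "w i" "w' j" m a b] c[OF i' j'] by (simp add: al_def be_def)
  qed auto
  have 3: "mat_delete (mat ?n ?n (\<lambda>(i,j). ?N i j + ?\<gamma> i * ?\<beta> j)) s j =
     mat m m (\<lambda>(i,j'). E m a b (w (insert_index s i)) (w' (insert_index j j')))" if s: "s < ?n" and j: "j < ?n" for s j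
  proof (rule eq_matI)
    fix r c' assume r: "r < dim_row (mat m m (\<lambda>(i,j'). E m a b (w (insert_index s i)) (w' (insert_index j j'))))"
      and c': "c' < dim_col (mat m m (\<lambda>(i,j'). E m a b (w (insert_index s i)) (w' (insert_index j j'))))"
    have r': "insert_index s r < ?n" "insert_index j c' < ?n" using r c' s j insert_index_lt by auto
    show "mat_delete (mat ?n ?n (\<lambda>(i,j). ?N i j + ?\<gamma> i * ?\<beta> j)) s j $$ (r, c') =
      mat m m (\<lambda>(i,j'). E m a b (w (insert_index s i)) (w' (insert_index j j'))) $$ (r, c')"
      using r c' r' E2[of "w (insert_index s r)" "w' (insert_index j c')" m a b] c[OF r']
      by (simp add: mat_delete_def insert_index_def be_def)
  qed (simp_all add: mat_delete_def)
  have "D ?n a b w w' - D ?n a (b-1) w w' =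
     det (mat ?n ?n (\<lambda>(i,j). ?N i j + ?\<alpha> i * ?\<beta> j)) - det (mat ?n ?n (\<lambda>(i,j). ?N i j))"
    unfolding D_def 1 by simp
  also have "\<dots> = (\<Sum>s<?n. \<Sum>j<?n. ?\<alpha> s * ?\<beta> j * ((-1)^(s+j) * det (mat_delete (mat ?n ?n (\<lambda>(i,j). ?N i j + ?\<gamma> i * ?\<beta> j)) s j)))"
    by (rule MDL_diff)
  also have "\<dots> = (\<Sum>s<Suc m. \<Sum>j<Suc m. al m b (w s) * be m b (w' j) *
       ((-1)^(s+j) * D m a b (\<lambda>r. w (insert_index s r)) (\<lambda>r. w' (insert_index j r))))"
  proof (intro sum.cong refl)
    fix s j assume "s \<in> {..<Suc m}" "j \<in> {..<Suc m}"
    hence sj: "s < ?n" "j < ?n" by auto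
    show "?\<alpha> s * ?\<beta> j * ((-1)^(s+j) * det (mat_delete (mat ?n ?n (\<lambda>(i,j). ?N i j + ?\<gamma> i * ?\<beta> j)) s j)) =
      al m b (w s) * be m b (w' j) * ((-1)^(s+j) * D m a b (\<lambda>r. w (insert_index s r)) (\<lambda>r. w' (insert_index j r)))"
      by (simp only: 3[OF sj] D_def)
  qed
  finally show ?thesis .
qed

lemma D_zero:
  assumes ok: "ok (Suc m) w w'"
  shows "D (Suc m) a (a-1) w w' = 0"
proof -
  let ?n = "Suc m"
  let ?P = "mat ?n ?n (\<lambda>(i,k). if k < m then w i ^ (k+1) * (w i + 1) powi a else 0)"
  let ?Q = "mat ?n ?n (\<lambda>(k,j). if k < m then w' j powi (- int (k+2)) * (w' j + 1) powi (1-a) else 0)"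
  have c: "\<And>i j. i < ?n \<Longrightarrow> j < ?n \<Longrightarrow> w i \<noteq> 0 \<and> w i + 1 \<noteq> 0 \<and> w' j \<noteq> 0 \<and> w' j + 1 \<noteq> 0 \<and> w i \<noteq> w' j"
    using ok unfolding ok_def by blast
  have PQ: "mat ?n ?n (\<lambda>(i,j). E ?n a (a-1) (w i) (w' j)) = ?P * ?Q"
  proof (rule eq_matI)
    fix i j assume i: "i < dim_row (?P * ?Q)" and j: "j < dim_col (?P * ?Q)"
    hence i': "i < ?n" and j': "j < ?n" by auto
    have "(?P * ?Q) $$ (i,j) = (\<Sum>k\<in>{0..<?n}. ?P $$ (i,k) * ?Q $$ (k,j))"
      using i' j' by (simp add: scalar_prod_def)
    also have "\<dots> = (\<Sum>k<?n. (if k < m then w i ^ (k+1) * (w i + 1) powi a else 0) *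
       (if k < m then w' j powi (- int (k+2)) * (w' j + 1) powi (1-a) else 0))"
      using i' j' by (intro sum.cong) auto
    also have "\<dots> = (\<Sum>k<m. (w i ^ (k+1) * (w i + 1) powi a) * (w' j powi (- int (k+2)) * (w' j + 1) powi (1-a)))"
      by (simp add: sum.lessThan_Suc)
    also have "\<dots> = E ?n a (a-1) (w i) (w' j)"
      using c[OF i' j'] by (intro E3[symmetric]) auto
    finally show "mat ?n ?n (\<lambda>(i,j). E ?n a (a-1) (w i) (w' j)) $$ (i,j) = (?P * ?Q) $$ (i,j)"
      using i' j' by simp
  qed auto
  have P0: "det ?P = 0"
    by (subst laplace_expansion_column[of _ ?n m]) auto
  have "D ?n a (a-1) w w' = det (?P * ?Q)" unfolding D_def PQ ..
  also have "\<dots> = det ?P * det ?Q" by (rule det_mult) auto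
  finally show ?thesis using P0 by simp
qed



lemma wc_finite: "finite (weak_chains k a b)"
proof -
  have "weak_chains k a b \<subseteq> {xs. set xs \<subseteq> {a..b} \<and> length xs = k}" unfolding weak_chains_def by auto
  moreover have "finite {xs. set xs \<subseteq> {a..b} \<and> length xs = k}" by (rule finite_lists_length_eq) simp
  ultimately show ?thesis by (rule finite_subset)
qed

lemma wc_split:
  assumes ab: "a \<le> b"
  shows "weak_chains (Suc m) a b = weak_chains (Suc m) a (b-1) \<union> (\<lambda>xs. xs @ [b]) ` weak_chains m a b"
proof (intro equalityI subsetI)
  fix xs assume xs: "xs \<in> weak_chains (Suc m) a b"
  then have "xs \<noteq> []" unfolding weak_chains_def by auto
  then obtain ys y where xy: "xs = ys @ [y]" by (metis rev_exhaust)
  have l: "length ys = m" and s: "sorted (ys @ [y])" and st: "set ys \<subseteq> {a..b}" "y \<in> {a..b}"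
    using xs unfolding weak_chains_def xy by auto
  have le: "\<forall>z\<in>set ys. z \<le> y" using s by (simp add: sorted_append)
  show "xs \<in> weak_chains (Suc m) a (b-1) \<union> (\<lambda>xs. xs @ [b]) ` weak_chains m a b"
  proof (cases "y = b")
    case True
    have "ys \<in> weak_chains m a b" using l s st unfolding weak_chains_def by (auto simp: sorted_append)
    then show ?thesis unfolding xy True by auto
  next
    case False
    hence "y \<le> b - 1" using st by auto
    hence "set xs \<subseteq> {a..b-1}" using le st unfolding xy by fastforce
    then show ?thesis using xs unfolding weak_chains_def by auto
  qed
next
  fix xs assume "xs \<in> weak_chains (Suc m) a (b-1) \<union> (\<lambda>xs. xs @ [b]) ` weak_chains m a b"
  then show "xs \<in> weak_chains (Suc m) a b"
    using ab unfolding weak_chains_def by (fastforce simp: sorted_append)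
qed

lemma wc_disj: "weak_chains (Suc m) a (b-1) \<inter> (\<lambda>xs. xs @ [b]) ` weak_chains m a b = {}"
  unfolding weak_chains_def by auto

lemma wc_empty: "weak_chains (Suc m) a (a-1) = {}"
  unfolding weak_chains_def by (auto simp: length_Suc_conv)

lemma wc_zero: "weak_chains 0 a b = {[]}"
  unfolding weak_chains_def by auto

lemma sign_sq: "((-1::complex)^(s+m)) * (-1)^(t+m) = (-1)^(s+t)"
proof -
  have "((-1::complex)^(s+m)) * (-1)^(t+m) = (-1)^(s+t) * ((-1)^m * (-1)^m)" by (simp add: power_add algebra_simps)
  also have "(-1::complex)^m * (-1)^m = 1" by (simp flip: power_add)
  finally show ?thesis by simp
qed

lemma detA_last:
  assumes l: "length ys = m"
  shows "det (mat (Suc m) (Suc m) (\<lambda>(i,j). (w i + 1) powi ((ys @ [b]) ! j) * w i ^ (j+1))) =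
    (\<Sum>s<Suc m. al m b (w s) * ((-1)^(s+m) * det (mat m m (\<lambda>(i,j). (w (insert_index s i) + 1) powi (ys ! j) * w (insert_index s i) ^ (j+1)))))"
  (is "det ?A = _")
proof -
  have nb: "(ys @ [b]) ! m = b" using l by (simp add: nth_append)
  have "det ?A = (\<Sum>s<Suc m. ?A $$ (s,m) * cofactor ?A s m)"
    by (rule laplace_expansion_column) auto
  also have "\<dots> = (\<Sum>s<Suc m. al m b (w s) * ((-1)^(s+m) * det (mat m m (\<lambda>(i,j). (w (insert_index s i) + 1) powi (ys ! j) * w (insert_index s i) ^ (j+1)))))"
  proof (intro sum.cong refl)
    fix s assume "s \<in> {..<Suc m}"
    hence s: "s < Suc m" by simp
    have md: "mat_delete ?A s m = mat m m (\<lambda>(i,j). (w (insert_index s i) + 1) powi (ys ! j) * w (insert_index s i) ^ (j+1))"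
      by (rule eq_matI) (use l s insert_index_lt in \<open>auto simp: mat_delete_def insert_index_def nth_append\<close>)
    show "?A $$ (s,m) * cofactor ?A s m = al m b (w s) * ((-1)^(s+m) * det (mat m m (\<lambda>(i,j). (w (insert_index s i) + 1) powi (ys ! j) * w (insert_index s i) ^ (j+1))))"
      unfolding cofactor_def md using s l by (simp add: al_def nb)
  qed
  finally show ?thesis .
qed

lemma detB_last:
  assumes l: "length ys = m"
  shows "det (mat (Suc m) (Suc m) (\<lambda>(i,j). (w i + 1) powi (- ((ys @ [b]) ! j)) * w i powi (- int (j+1)))) =
    (\<Sum>s<Suc m. be m b (w s) * ((-1)^(s+m) * det (mat m m (\<lambda>(i,j). (w (insert_index s i) + 1) powi (- (ys ! j)) * w (insert_index s i) powi (- int (j+1))))))"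
  (is "det ?A = _")
proof -
  have nb: "(ys @ [b]) ! m = b" using l by (simp add: nth_append)
  have "det ?A = (\<Sum>s<Suc m. ?A $$ (s,m) * cofactor ?A s m)"
    by (rule laplace_expansion_column) auto
  also have "\<dots> = (\<Sum>s<Suc m. be m b (w s) * ((-1)^(s+m) * det (mat m m (\<lambda>(i,j). (w (insert_index s i) + 1) powi (- (ys ! j)) * w (insert_index s i) powi (- int (j+1))))))"
  proof (intro sum.cong refl)
    fix s assume "s \<in> {..<Suc m}"
    hence s: "s < Suc m" by simp
    have md: "mat_delete ?A s m = mat m m (\<lambda>(i,j). (w (insert_index s i) + 1) powi (- (ys ! j)) * w (insert_index s i) powi (- int (j+1)))"
      by (rule eq_matI) (use l s insert_index_lt in \<open>auto simp: mat_delete_def insert_index_def nth_append\<close>)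
    show "?A $$ (s,m) * cofactor ?A s m = be m b (w s) * ((-1)^(s+m) * det (mat m m (\<lambda>(i,j). (w (insert_index s i) + 1) powi (- (ys ! j)) * w (insert_index s i) powi (- int (j+1)))))"
      unfolding cofactor_def md using s l by (simp add: be_def nb)
  qed
  finally show ?thesis .
qed



lemma S_step:
  assumes ab: "a \<le> b"
  shows "S_hat (Suc m) a b w w' = S_hat (Suc m) a (b-1) w w' +
    (\<Sum>s<Suc m. \<Sum>j<Suc m. al m b (w s) * be m b (w' j) *
       ((-1)^(s+j) * S_hat m a b (\<lambda>r. w (insert_index s r)) (\<lambda>r. w' (insert_index j r))))"
proof -
  define F where "F xs = det (mat (Suc m) (Suc m) (\<lambda>(i,j). (w i + 1) powi (xs ! j) * (w i) ^ (j+1)))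
      * det (mat (Suc m) (Suc m) (\<lambda>(i,j). (w' i + 1) powi (- (xs ! j)) * (w' i) powi (- int (j+1))))" for xs
  define dA where "dA s ys = det (mat m m (\<lambda>(i,j). (w (insert_index s i) + 1) powi (ys ! j) * w (insert_index s i) ^ (j+1)))" for s ys
  define dB where "dB s ys = det (mat m m (\<lambda>(i,j). (w' (insert_index s i) + 1) powi (- (ys ! j)) * w' (insert_index s i) powi (- int (j+1))))" for s ys
  have S1: "S_hat (Suc m) a b w w' = (\<Sum>xs\<in>weak_chains (Suc m) a b. F xs)"
    unfolding S_hat_def F_def ..
  have S2: "S_hat (Suc m) a (b-1) w w' = (\<Sum>xs\<in>weak_chains (Suc m) a (b-1). F xs)"
    unfolding S_hat_def F_def ..
  have S3: "S_hat m a b (\<lambda>r. w (insert_index s r)) (\<lambda>r. w' (insert_index j r)) = (\<Sum>ys\<in>weak_chains m a b. dA s ys * dB j ys)" for s j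
    unfolding S_hat_def dA_def dB_def ..
  have Fy: "F (ys @ [b]) = (\<Sum>s<Suc m. \<Sum>j<Suc m. al m b (w s) * be m b (w' j) * ((-1)^(s+j) * (dA s ys * dB j ys)))"
    if ys: "ys \<in> weak_chains m a b" for ys
  proof -
    have l: "length ys = m" using ys unfolding weak_chains_def by auto
    have "F (ys @ [b]) = (\<Sum>s<Suc m. al m b (w s) * ((-1)^(s+m) * dA s ys)) * (\<Sum>j<Suc m. be m b (w' j) * ((-1)^(j+m) * dB j ys))"
      unfolding F_def detA_last[OF l] detB_last[OF l] dA_def dB_def ..
    also have "\<dots> = (\<Sum>s<Suc m. \<Sum>j<Suc m. (al m b (w s) * ((-1)^(s+m) * dA s ys)) * (be m b (w' j) * ((-1)^(j+m) * dB j ys)))"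
      by (rule sum_product)
    also have "\<dots> = (\<Sum>s<Suc m. \<Sum>j<Suc m. al m b (w s) * be m b (w' j) * ((-1)^(s+j) * (dA s ys * dB j ys)))"
    proof (intro sum.cong refl)
      fix s j
      have "(al m b (w s) * ((-1)^(s+m) * dA s ys)) * (be m b (w' j) * ((-1)^(j+m) * dB j ys)) =
         al m b (w s) * be m b (w' j) * (((-1::complex)^(s+m) * (-1)^(j+m)) * (dA s ys * dB j ys))"
        by (simp only: ac_simps)
      then show "(al m b (w s) * ((-1)^(s+m) * dA s ys)) * (be m b (w' j) * ((-1)^(j+m) * dB j ys)) =
         al m b (w s) * be m b (w' j) * ((-1)^(s+j) * (dA s ys * dB j ys))"
        by (simp only: sign_sq)
    qed
    finally show ?thesis .
  qed
  have inj: "inj_on (\<lambda>xs. xs @ [b]) (weak_chains m a b)" by (simp add: inj_on_def)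
  have "S_hat (Suc m) a b w w' = (\<Sum>xs\<in>weak_chains (Suc m) a (b-1). F xs) + (\<Sum>xs\<in>(\<lambda>xs. xs @ [b]) ` weak_chains m a b. F xs)"
    unfolding S1 wc_split[OF ab] by (rule sum.union_disjoint) (use wc_finite wc_disj in auto)
  also have "(\<Sum>xs\<in>(\<lambda>xs. xs @ [b]) ` weak_chains m a b. F xs) = (\<Sum>ys\<in>weak_chains m a b. F (ys @ [b]))"
    by (simp add: sum.reindex[OF inj])
  also have "\<dots> = (\<Sum>ys\<in>weak_chains m a b. \<Sum>s<Suc m. \<Sum>j<Suc m. al m b (w s) * be m b (w' j) * ((-1)^(s+j) * (dA s ys * dB j ys)))"
    by (rule sum.cong) (simp_all add: Fy)
  also have "\<dots> = (\<Sum>s<Suc m. \<Sum>j<Suc m. \<Sum>ys\<in>weak_chains m a b. al m b (w s) * be m b (w' j) * ((-1)^(s+j) * (dA s ys * dB j ys)))"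
    by (simp add: sum.swap[of _ "weak_chains m a b"])
  also have "\<dots> = (\<Sum>s<Suc m. \<Sum>j<Suc m. al m b (w s) * be m b (w' j) * ((-1)^(s+j) * S_hat m a b (\<lambda>r. w (insert_index s r)) (\<lambda>r. w' (insert_index j r))))"
    by (simp add: S3 sum_distrib_left)
  finally show ?thesis unfolding S2 .
qed

lemma main_ind:
  "\<forall>w w' b. ok m w w' \<longrightarrow> a - 1 \<le> b \<longrightarrow> S_hat m a b w w' = D m a b w w'"
proof (induction m)
  case 0
  show ?case by (simp add: S_hat_def D_def wc_zero)
next
  case (Suc m)
  show ?case
  proof (intro allI impI)
    fix w w' b assume ok: "ok (Suc m) w w'" and b: "a - 1 \<le> b"
    show "S_hat (Suc m) a b w w' = D (Suc m) a b w w'"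
      using b
    proof (induction b rule: int_ge_induct)
      case base
      show ?case using D_zero[OF ok] by (simp add: S_hat_def wc_empty)
    next
      case (step c)
      have ab: "a \<le> c + 1" using step by simp
      have IH: "S_hat m a (c+1) (\<lambda>r. w (insert_index s r)) (\<lambda>r. w' (insert_index j r)) =
           D m a (c+1) (\<lambda>r. w (insert_index s r)) (\<lambda>r. w' (insert_index j r))" if "s < Suc m" "j < Suc m" for s j
        using Suc.IH ok_del[OF ok that] ab by simp
      have "S_hat (Suc m) a (c+1) w w' = S_hat (Suc m) a c w w' +
        (\<Sum>s<Suc m. \<Sum>j<Suc m. al m (c+1) (w s) * be m (c+1) (w' j) *
          ((-1)^(s+j) * S_hat m a (c+1) (\<lambda>r. w (insert_index s r)) (\<lambda>r. w' (insert_index j r))))"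
        using S_step[OF ab, of m w w'] by simp
      also have "\<dots> = D (Suc m) a c w w' +
        (\<Sum>s<Suc m. \<Sum>j<Suc m. al m (c+1) (w s) * be m (c+1) (w' j) *
          ((-1)^(s+j) * D m a (c+1) (\<lambda>r. w (insert_index s r)) (\<lambda>r. w' (insert_index j r))))"
      proof -
        have "(\<Sum>s<Suc m. \<Sum>j<Suc m. al m (c+1) (w s) * be m (c+1) (w' j) *
          ((-1)^(s+j) * S_hat m a (c+1) (\<lambda>r. w (insert_index s r)) (\<lambda>r. w' (insert_index j r)))) =
          (\<Sum>s<Suc m. \<Sum>j<Suc m. al m (c+1) (w s) * be m (c+1) (w' j) *
          ((-1)^(s+j) * D m a (c+1) (\<lambda>r. w (insert_index s r)) (\<lambda>r. w' (insert_index j r))))"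
          by (intro sum.cong refl) (simp add: IH)
        then show ?thesis using step.IH by simp
      qed
      also have "\<dots> = D (Suc m) a (c+1) w w'"
      proof -
        have h: "D (Suc m) a (c+1) w w' - D (Suc m) a c w w' = (\<Sum>s<Suc m. \<Sum>j<Suc m. al m (c+1) (w s) * be m (c+1) (w' j) *
          ((-1)^(s+j) * D m a (c+1) (\<lambda>r. w (insert_index s r)) (\<lambda>r. w' (insert_index j r))))"
          using D_step[OF ok, of a "c+1"] by simp
        show ?thesis unfolding h[symmetric] by simp
      qed
      finally show ?case .
    qed
  qed
qed


theorem mainTheorem10:
  fixes k :: nat and a b :: int and w w' :: "nat \<Rightarrow> complex"
  assumes "k \<ge> 1" and "a \<le> b"
    and "\<And>i. i < k \<Longrightarrow> w i \<noteq> 0 \<and> w i \<noteq> -1"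
    and "\<And>i. i < k \<Longrightarrow> w' i \<noteq> 0 \<and> w' i \<noteq> -1"
    and "\<And>i i'. i < k \<Longrightarrow> i' < k \<Longrightarrow> w i \<noteq> w' i'"
  shows "S_hat k a b w w' =
    det (mat k k (\<lambda>(i,i').
        1 / (- w i + w' i') * (w i * (w i + 1) powi a / (w' i' * (w' i' + 1) powi (a - 1)))
      + 1 / (w i - w' i') * ((w i) ^ k * (w i + 1) powi (b + 1) / ((w' i') ^ k * (w' i' + 1) powi b))))"
proof -
  have n1: "\<And>z::complex. z \<noteq> -1 \<Longrightarrow> z + 1 \<noteq> 0"
    by (metis add.commute add_eq_0_iff)
  have ok: "ok k w w'"
    unfolding ok_def using assms(3,4,5) n1 by blast
  have "S_hat k a b w w' = D k a b w w'"
    using main_ind[of k a] ok assms(2) by simp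
  then show ?thesis unfolding D_def E_def .
qed

end
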